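(* Let $H_\alpha(k)$, $k\in\mathbb T^d$, be the fiber magnetic Schrödinger operator on the fundamental graph $\mathcal G_*=(\mathcal V_*,\mathcal A_* )$ (see context), and let $\tau_+=\max_{\mathbf e\in\mathcal A_*}\|\tau(\mathbf e)\|$ (Euclidean norm). Then for each $n\in\mathbb N$: (i) $\displaystyle \operatorname{Tr}H_\alpha^n(k)=\sum_{j=1}^{\nu}\lambda_{\alpha,j}^n(k)=\mathcal T_{\alpha,n}(k)$, where $$\mathcal T_{\alpha,n}(k)=\sum_{\mathbf c\in\widetilde{\mathcal C}_n}\omega(\mathbf c)e^{-i\phi(\mathbf c,k)}=\sum_{\mathbf c\in\widetilde{\mathcal C}_n}\omega(\mathbf c)\cos\phi(\mathbf c,k),\qquad \phi(\mathbf c,k)=\alpha(\mathbf c)+\langle\tau(\mathbf c),k\rangle,$$ or, in the form of a Fourier series, $$\mathcal T_{\alpha,n}(k)=\sum_{\mathrm m\in\mathbb Z^d,\ \|\mathrm m\|\le n\tau_+}\mathcal T_{\alpha,n,\mathrm m}e^{-i\langle\mathrm m,k\rangle},\qquad \mathcal T_{\alpha,n,\mathrm m}=\sum_{\mathbf c\in\widetilde{\mathcal C}_n^{\mathrm m}}\omega(\mathbf c)e^{-i\alpha(\mathbf c)}.$$ (ii) $\displaystyle \frac1{(2\pi)^d}\int_{\mathbb T^d}\operatorname{Tr}H_\alpha^n(k)\,dk=\mathcal T_{\alpha,n,0}$, where $\displaystyle\mathcal T_{\alpha,n,0}=\sum_{\mathbf c\in\widetilde{\mathcal C}_n^0}\omega(\mathbf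 c)e^{-i\alpha(\mathbf c)}=\sum_{\mathbf c\in\widetilde{\mathcal C}_n^0}\omega(\mathbf c)\cos\alpha(\mathbf c)$.
   Context: Let $\Gamma\subset\mathbb R^d$ be a lattice with basis $\mathfrak a_1,\dots,\mathfrak a_d$ and fundamental cell $\Omega=\{\sum_s x_s\mathfrak a_s:(x_s)\in[0,1)^d\}$. Let $\mathcal G=(\mathcal V,\mathcal E)$ be a connected, locally finite, infinite graph embedded in $\mathbb R^d$ (loops and multiple edges allowed), invariant under translations by $\Gamma$, whose quotient $\mathcal G_*=\mathcal G/\Gamma=(\mathcal V_*,\mathcal E_* )$ (fundamental graph) is finite; $\nu=\#\mathcal V_*$. Each unoriented edge gives two oriented edges; $\mathcal A$, $\mathcal A_*=\mathcal A/\Gamma$ are the sets of oriented edges of $\mathcal G,\mathcal G_*$; $(x,y)$ is an oriented edge from $x$ to $y$ and $\underline{\mathbf e}$ the inverse of $\mathbf e$. The degree $\varkappa_x$ is the number of oriented edges starting at $x$ (loops counted twice). Edge index: each $x\in\mathcal V$ is uniquely $x=x_0+[x]$ with $x_0\in\mathcal V\cap\Omega$, $[x]\in\Gamma$; let $[x]_{\mathbb A}\in\mathbb Z^d$ be the coordinates of $[x]$ in the basis $(\mathfrak a_s)$; for $\mathbf e=(x,y)\in\mathcal A$, $\tau(\mathbf e)=[y]_{\mathbb A}-[x]_{\mathbb A}\in\mathbb Z^d$; this is $\Gamma$-invariant and so defines $\tau$ on $\mathcal A_*$, with $\tau(\underline{\mathbf e})=-\tau(\mathbf e)$. A periodic magnetic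 potential is $\alpha:\mathcal A\to\mathbb R$ with $\alpha(\underline{\mathbf e})=-\alpha(\mathbf e)$ and $\alpha(\mathbf e+\gamma)=\alpha(\mathbf e)$ for $\gamma\in\Gamma$ (hence defined on $\mathcal A_*$); a periodic electric potential is a $\Gamma$-periodic $V:\mathcal V\to\mathbb R$ (regarded as a function on $\mathcal V_*$). For $k\in\mathbb T^d=\mathbb R^d/(2\pi\mathbb Z)^d$, the fiber operator on $\ell^2(\mathcal V_* )=\mathbb C^\nu$ is $H_\alpha(k)=-\Delta_\alpha(k)+V$, $\Delta_\alpha(k)=\varkappa-A_\alpha(k)$, where $(Vf)_x=V_xf_x$, $(\varkappa f)_x=\varkappa_xf_x$, $(A_\alpha(k)f)_x=\sum_{\mathbf e=(x,y)\in\mathcal A_*}e^{i(\alpha(\mathbf e)+\langle\tau(\mathbf e),k\rangle)}f_y$; its eigenvalues are $\lambda_{\alpha,1}(k)\le\dots\le\lambda_{\alpha,\nu}(k)$. Cycles: a path is a sequence of oriented edges $(\mathbf e_1,\dots,\mathbf e_n)$ with $\mathbf e_s=(x_{s-1},x_s)$; it is a cycle if $x_n=x_0$, of length $|\mathbf c|=n$. Cycles are ordered edge sequences (distinct cyclic shifts are distinct cycles) and backtracking cycles are included. For a cycle $\mathbf c$: index $\tau(\mathbf c)=\sum_{\mathbf e\in\mathbf c}\tau(\mathbf e)\in\mathbb Z^d$, flux $\alpha(\mathbf c)=(\sum_{\mathbf e\in\mathbf c}\alpha(\mathbf e))\bmod 2\pi$. Modified fundamental graph $\widetilde{\mathcal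 G}_*$: add at each $x\in\mathcal V_*$ one extra oriented loop $\mathbf e_x$ (a single oriented edge, $\underline{\mathbf e_x}=\mathbf e_x$) with $\tau(\mathbf e_x)=0$, $\alpha(\mathbf e_x)=0$. Weights: $\omega(\mathbf e)=1$ for $\mathbf e\in\mathcal A_*$, $\omega(\mathbf e_x)=v_x:=V_x-\varkappa_x$; for a cycle $\mathbf c=(\mathbf e_1,\dots,\mathbf e_n)$ of $\widetilde{\mathcal G}_*$, $\omega(\mathbf c)=\omega(\mathbf e_1)\cdots\omega(\mathbf e_n)$. $\widetilde{\mathcal C}_n$ is the set of cycles of length $n$ in $\widetilde{\mathcal G}_*$ and $\widetilde{\mathcal C}_n^{\mathrm m}$ the subset of those with index $\mathrm m\in\mathbb Z^d$. *)

theory Defs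
  imports "HOL-Analysis.Analysis" "Jordan_Normal_Form.Char_Poly"
begin

text \<open>Fundamental graph: vertices are 0..<nu, oriented edges are the elements of a
finite type 'e, with source/target maps, edge inversion einv, edge index tau (in Z^d,
d = CARD('d)) and magnetic potential alpha.\<close>

definition fundamental_graph ::
  "nat \<Rightarrow> ('e::finite \<Rightarrow> nat) \<Rightarrow> ('e \<Rightarrow> nat) \<Rightarrow> ('e \<Rightarrow> 'e) \<Rightarrow> ('e \<Rightarrow> int^'d::finite) \<Rightarrow> bool" where
  "fundamental_graph nu src tgt einv tau \<longleftrightarrow>
     1 \<le> nu \<and> (\<forall>e. src e < nu \<and> tgt e < nu) \<and>
     (\<forall>e. einv (einv e) = e \<and> einv e \<noteq> e \<and> src (einv e) = tgt e \<and> tgt (einv e) = src e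
          \<and> tau (einv e) = - tau e)"

definition magnetic_potential :: "('e \<Rightarrow> 'e) \<Rightarrow> ('e \<Rightarrow> real) \<Rightarrow> bool" where
  "magnetic_potential einv alpha \<longleftrightarrow> (\<forall>e. alpha (einv e) = - alpha e)"

fun walk :: "('e \<Rightarrow> nat) \<Rightarrow> ('e \<Rightarrow> nat) \<Rightarrow> nat \<Rightarrow> 'e list \<Rightarrow> nat \<Rightarrow> bool" where
  "walk src tgt x [] y = (x = y)"
| "walk src tgt x (e # p) y = (src e = x \<and> walk src tgt (tgt e) p y)"

text \<open>Connectedness of the periodic graph G: vertex x + m (x in V_*, m in Z^d) of G is
reachable from every vertex x0 + 0; equivalently every (y, m) reachable from (x, 0).\<close>
definition periodic_connected ::
  "nat \<Rightarrow> ('e \<Rightarrow> nat) \<Rightarrow> ('e \<Rightarrow> nat) \<Rightarrow> ('e \<Rightarrow> int^'d::finite) \<Rightarrow> bool" where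
  "periodic_connected nu src tgt tau \<longleftrightarrow>
     (\<forall>x<nu. \<forall>y<nu. \<forall>m. \<exists>p. walk src tgt x p y \<and> sum_list (map tau p) = m)"

definition deg :: "('e::finite \<Rightarrow> nat) \<Rightarrow> nat \<Rightarrow> nat" where
  "deg src x = card {e. src e = x}"

definition ip :: "int^'d::finite \<Rightarrow> real^'d \<Rightarrow> real" where
  "ip m k = (\<Sum>i\<in>UNIV. real_of_int (m $ i) * k $ i)"

definition ivnorm :: "int^'d::finite \<Rightarrow> real" where
  "ivnorm m = sqrt (\<Sum>i\<in>UNIV. (real_of_int (m $ i))^2)"

definition mat_trace :: "complex Matrix.mat \<Rightarrow> complex" where
  "mat_trace A = (\<Sum>i<dim_row A. A $$ (i, i))"

text \<open>Fiber operator H_alpha(k) = -Delta_alpha(k) + V = A_alpha(k) - kappa + V.\<close>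
definition fiber_op ::
  "nat \<Rightarrow> ('e::finite \<Rightarrow> nat) \<Rightarrow> ('e \<Rightarrow> nat) \<Rightarrow> ('e \<Rightarrow> int^'d::finite) \<Rightarrow> ('e \<Rightarrow> real)
   \<Rightarrow> (nat \<Rightarrow> real) \<Rightarrow> real^'d \<Rightarrow> complex Matrix.mat" where
  "fiber_op nu src tgt tau alpha V k = Matrix.mat nu nu (\<lambda>(x, y).
      (\<Sum>e\<in>{e. src e = x \<and> tgt e = y}. exp (\<i> * complex_of_real (alpha e + ip (tau e) k)))
      + (if x = y then complex_of_real (V x - real (deg src x)) else 0))"

text \<open>Modified fundamental graph: oriented edges Inl e (e in A_*) and Inr x (the extra loop at x).\<close>
fun msrc :: "('e \<Rightarrow> nat) \<Rightarrow> 'e + nat \<Rightarrow> nat" where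
  "msrc src (Inl e) = src e" | "msrc src (Inr x) = x"
fun mtgt :: "('e \<Rightarrow> nat) \<Rightarrow> 'e + nat \<Rightarrow> nat" where
  "mtgt tgt (Inl e) = tgt e" | "mtgt tgt (Inr x) = x"
fun mvalid :: "nat \<Rightarrow> 'e + nat \<Rightarrow> bool" where
  "mvalid nu (Inl e) = True" | "mvalid nu (Inr x) = (x < nu)"
fun momega :: "('e::finite \<Rightarrow> nat) \<Rightarrow> (nat \<Rightarrow> real) \<Rightarrow> 'e + nat \<Rightarrow> real" where
  "momega src V (Inl e) = 1" | "momega src V (Inr x) = V x - real (deg src x)"
fun mtau :: "('e \<Rightarrow> int^'d::finite) \<Rightarrow> 'e + nat \<Rightarrow> int^'d" where
  "mtau tau (Inl e) = tau e" | "mtau tau (Inr x) = 0"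
fun malpha :: "('e \<Rightarrow> real) \<Rightarrow> 'e + nat \<Rightarrow> real" where
  "malpha alpha (Inl e) = alpha e" | "malpha alpha (Inr x) = 0"

text \<open>Cycles of length n in the modified graph (ordered edge sequences, closed).\<close>
definition mcycles :: "nat \<Rightarrow> ('e \<Rightarrow> nat) \<Rightarrow> ('e \<Rightarrow> nat) \<Rightarrow> nat \<Rightarrow> ('e + nat) list set" where
  "mcycles nu src tgt n = {c. length c = n \<and> (\<forall>a\<in>set c. mvalid nu a) \<and>
      (\<forall>i<n. mtgt tgt (c ! i) = msrc src (c ! (Suc i mod n)))}"

definition cyc_weight :: "('e::finite \<Rightarrow> nat) \<Rightarrow> (nat \<Rightarrow> real) \<Rightarrow> ('e + nat) list \<Rightarrow> real" where
  "cyc_weight src V c = prod_list (map (momega src V) c)"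
definition cyc_index :: "('e \<Rightarrow> int^'d::finite) \<Rightarrow> ('e + nat) list \<Rightarrow> int^'d" where
  "cyc_index tau c = sum_list (map (mtau tau) c)"
definition cyc_flux :: "('e \<Rightarrow> real) \<Rightarrow> ('e + nat) list \<Rightarrow> real" where
  "cyc_flux alpha c = sum_list (map (malpha alpha) c)"
  (* flux taken as a real representative; only used through cos / exp, so mod 2pi is immaterial *)

definition cyc_phase :: "('e \<Rightarrow> int^'d::finite) \<Rightarrow> ('e \<Rightarrow> real) \<Rightarrow> ('e + nat) list \<Rightarrow> real^'d \<Rightarrow> real" where
  "cyc_phase tau alpha c k = cyc_flux alpha c + ip (cyc_index tau c) k"

definition trace_T ::
  "nat \<Rightarrow> ('e::finite \<Rightarrow> nat) \<Rightarrow> ('e \<Rightarrow> nat) \<Rightarrow> ('e \<Rightarrow> int^'d::finite) \<Rightarrow> ('e \<Rightarrow> real)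
   \<Rightarrow> (nat \<Rightarrow> real) \<Rightarrow> nat \<Rightarrow> real^'d \<Rightarrow> complex" where
  "trace_T nu src tgt tau alpha V n k =
     (\<Sum>c\<in>mcycles nu src tgt n. complex_of_real (cyc_weight src V c)
          * exp (- \<i> * complex_of_real (cyc_phase tau alpha c k)))"

definition trace_Tm ::
  "nat \<Rightarrow> ('e::finite \<Rightarrow> nat) \<Rightarrow> ('e \<Rightarrow> nat) \<Rightarrow> ('e \<Rightarrow> int^'d::finite) \<Rightarrow> ('e \<Rightarrow> real)
   \<Rightarrow> (nat \<Rightarrow> real) \<Rightarrow> nat \<Rightarrow> int^'d \<Rightarrow> complex" where
  "trace_Tm nu src tgt tau alpha V n m =
     (\<Sum>c\<in>{c\<in>mcycles nu src tgt n. cyc_index tau c = m}. complex_of_real (cyc_weight src V c)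
          * exp (- \<i> * complex_of_real (cyc_flux alpha c)))"

definition tau_plus :: "('e::finite \<Rightarrow> int^'d::finite) \<Rightarrow> real" where
  "tau_plus tau = Max (range (\<lambda>e. ivnorm (tau e)))"

end

theory Submission
  imports Defs "Jordan_Normal_Form.Schur_Decomposition"
begin

no_notation Matrix.vec_index (infixl \<open>$\<close> 100)
no_notation Matrix.scalar_prod (infix \<open>\<bullet>\<close> 70)

lemma integral_lborel_prod_basis:
  fixes f :: "'a::euclidean_space \<Rightarrow> real \<Rightarrow> complex"
  assumes int: "\<And>b. b \<in> Basis \<Longrightarrow> integrable lborel (f b)"
  shows "(\<integral>x. (\<Prod>b\<in>Basis. f b (x \<bullet> b)) \<partial>(lborel::'a measure)) = (\<Prod>b\<in>Basis. \<integral>t. f b t \<partial>lborel)"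
proof -
  interpret product_sigma_finite "\<lambda>_::'a. lborel::real measure"
    by standard
  have [measurable]: "\<And>b. b \<in> Basis \<Longrightarrow> f b \<in> borel_measurable borel"
  proof -
    fix b :: 'a assume "b \<in> Basis"
    then have "f b \<in> borel_measurable lborel" using int borel_measurable_integrable by blast
    then show "f b \<in> borel_measurable borel" by simp
  qed
  have L: "(lborel::'a measure) = distr (\<Pi>\<^sub>M b\<in>Basis. lborel) borel (\<lambda>f. \<Sum>b\<in>Basis. f b *\<^sub>R b)"
    by (rule lborel_eq)
  have "(\<integral>x. (\<Prod>b\<in>Basis. f b (x \<bullet> b)) \<partial>(lborel::'a measure))
     = (\<integral>x. (\<Prod>b\<in>Basis. f b (x \<bullet> b)) \<partial>distr (\<Pi>\<^sub>M b\<in>Basis. lborel) borel (\<lambda>f. \<Sum>b\<in>Basis. f b *\<^sub>R b))"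
    using L by simp
  also have "\<dots> = (\<integral>x. (\<Prod>b\<in>Basis. f b ((\<Sum>b'\<in>Basis. x b' *\<^sub>R b') \<bullet> b)) \<partial>(\<Pi>\<^sub>M b\<in>Basis. lborel))"
    by (rule integral_distr) measurable
  also have "\<dots> = (\<integral>x. (\<Prod>b\<in>Basis. f b (x b)) \<partial>(\<Pi>\<^sub>M b\<in>Basis. lborel))"
    by (intro Bochner_Integration.integral_cong refl prod.cong)
       (simp add: inner_sum_left inner_Basis if_distrib sum.delta cong: if_cong)
  also have "\<dots> = (\<Prod>b\<in>Basis. \<integral>t. f b t \<partial>lborel)"
    by (rule product_integral_prod) (auto intro: int)
  finally show ?thesis .
qed


lemma int1d:
  fixes z :: int
  shows "integral {0..2*pi} (\<lambda>t. exp (- \<i> * complex_of_real (of_int z * t)))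
     = (if z = 0 then complex_of_real (2*pi) else 0)"
proof (cases "z = 0")
  case True then show ?thesis by (simp add: scaleR_conv_of_real)
next
  case False
  define F where "F t = exp (- \<i> * complex_of_real (of_int z * t)) / (- \<i> * of_int z)" for t
  have "((\<lambda>t. exp (- \<i> * complex_of_real (of_int z * t))) has_integral F (2*pi) - F 0) {0..2*pi}"
  proof (rule fundamental_theorem_of_calculus)
    fix x assume "x \<in> {0..2*pi}"
    have "((\<lambda>w. exp (- \<i> * (of_int z * w)) / (- \<i> * of_int z)) has_field_derivative exp (- \<i> * complex_of_real (of_int z * x))) (at (complex_of_real x))"
      using False by (auto intro!: derivative_eq_intros simp: field_simps)
    from has_vector_derivative_real_field[OF this]
    show "(F has_vector_derivative exp (- \<i> * complex_of_real (of_int z * x))) (at x within {0..2*pi})"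
      unfolding F_def by simp
  qed simp
  moreover have "F (2*pi) = F 0"
  proof -
    have "exp (- \<i> * complex_of_real (of_int z * (2*pi))) = cis (- (of_int z * (2*pi)))"
      by (simp add: cis_conv_exp)
    also have "\<dots> = cis (- (2*pi * of_int z))" by (simp add: mult.commute)
    also have "\<dots> = 1" by (simp add: complex_eq_iff)
    finally show ?thesis unfolding F_def by simp
  qed
  ultimately show ?thesis using False by (simp add: integral_unique)
qed

lemma Basis_vec_range: "(Basis :: (real^'d::finite) set) = range (\<lambda>i. axis i 1)"
  by (auto simp: Basis_vec_def)

lemma box_exp_integral:
  fixes m :: "int^'d::finite"
  shows "integral (cbox (0::real^'d) (\<chi> i. 2*pi)) (\<lambda>k. exp (- \<i> * complex_of_real (ip m k)))
       = (if m = 0 then complex_of_real ((2*pi)^CARD('d)) else 0)"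
proof -
  define rm where "rm = (\<chi> i. real_of_int (m $ i))"
  define c where "c = (\<chi> i::'d. 2*pi)"
  have ipr: "ip m k = rm \<bullet> k" for k
    by (simp add: ip_def rm_def inner_vec_def)
  define f where "f b t = indicator {0..2*pi} t *\<^sub>R exp (- \<i> * complex_of_real ((rm \<bullet> b) * t))"
    for b :: "real^'d" and t :: real
  define g where "g k = exp (- \<i> * complex_of_real (rm \<bullet> k))" for k :: "real^'d"
  have cb: "c \<bullet> b = 2*pi" if "b \<in> Basis" for b
    using that by (auto simp: Basis_vec_range c_def inner_axis)
  have ind: "indicator (cbox 0 c) k = (\<Prod>b\<in>Basis. indicator {0..2*pi} (k \<bullet> b) :: real)" for k :: "real^'d"
  proof -
    have "k \<in> cbox 0 c \<longleftrightarrow> (\<forall>b\<in>Basis. k \<bullet> b \<in> {0..2*pi})"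
      using cb by (auto simp: mem_box)
    then show ?thesis
      by (auto simp: indicator_def prod_zero_iff)
  qed
  have gp: "g k = (\<Prod>b\<in>Basis. exp (- \<i> * complex_of_real ((rm \<bullet> b) * (k \<bullet> b))))" for k
  proof -
    have "- \<i> * complex_of_real (rm \<bullet> k) = (\<Sum>b\<in>Basis. - \<i> * complex_of_real ((rm \<bullet> b) * (k \<bullet> b)))"
      by (subst euclidean_inner) (simp add: sum_distrib_left)
    then show ?thesis unfolding g_def by (simp add: exp_sum)
  qed
  have prodf: "indicator (cbox 0 c) k *\<^sub>R g k = (\<Prod>b\<in>Basis. f b (k \<bullet> b))" for k
    unfolding ind gp f_def by (simp add: prod.distrib scaleR_conv_of_real)
  have contg: "continuous_on S g" for S
    unfolding g_def by (intro continuous_intros)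
  have intg: "integrable lborel (\<lambda>k. indicator (cbox 0 c) k *\<^sub>R g k)"
    by (rule borel_integrable_compact) (auto intro: contg)
  have intf: "integrable lborel (f b)" for b
    unfolding f_def by (rule borel_integrable_compact) (auto intro!: continuous_intros)
  have "integral (cbox 0 c) g = integral UNIV (\<lambda>k. indicator (cbox 0 c) k *\<^sub>R g k)"
    by (simp add: indicator_scaleR_eq_if integral_restrict_UNIV)
  also have "\<dots> = (\<integral>k. indicator (cbox 0 c) k *\<^sub>R g k \<partial>lborel)"
    by (rule integral_lborel[OF intg])
  also have "\<dots> = (\<integral>k. (\<Prod>b\<in>Basis. f b (k \<bullet> b)) \<partial>lborel)"
    by (simp add: prodf)
  also have "\<dots> = (\<Prod>b\<in>Basis. \<integral>t. f b t \<partial>lborel)"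
    by (rule integral_lborel_prod_basis) (rule intf)
  also have "\<dots> = (\<Prod>i\<in>UNIV. \<integral>t. f (axis i 1) t \<partial>lborel)"
    unfolding Basis_vec_range by (subst prod.reindex) (auto simp: inj_on_def axis_eq_axis)
  also have "\<dots> = (\<Prod>i\<in>UNIV. if m $ i = 0 then complex_of_real (2*pi) else 0)"
  proof (intro prod.cong refl)
    fix i
    have "(\<integral>t. f (axis i 1) t \<partial>lborel) = integral UNIV (f (axis i 1))"
      by (rule integral_lborel[OF intf, symmetric])
    also have "\<dots> = integral {0..2*pi} (\<lambda>t. exp (- \<i> * complex_of_real (of_int (m $ i) * t)))"
    proof -
      have "f (axis i 1) = (\<lambda>t. if t \<in> {0..2*pi} then exp (- \<i> * complex_of_real (of_int (m $ i) * t)) else 0)"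
        by (rule ext) (simp add: f_def rm_def inner_axis)
      then show ?thesis by (simp only: integral_restrict_UNIV)
    qed
    also have "\<dots> = (if m $ i = 0 then complex_of_real (2*pi) else 0)"
      by (rule int1d)
    finally show "(\<integral>t. f (axis i 1) t \<partial>lborel) = (if m $ i = 0 then complex_of_real (2*pi) else 0)" .
  qed
  also have "\<dots> = (if m = 0 then complex_of_real ((2*pi)^CARD('d)) else 0)"
  proof (cases "m = 0")
    case True then show ?thesis by simp
  next
    case False
    then obtain i where "vec_nth m i \<noteq> 0" by (metis Finite_Cartesian_Product.vec_eq_iff Finite_Cartesian_Product.zero_index)
    then show ?thesis using False by (auto simp: prod_zero_iff)
  qed
  finally show ?thesis unfolding c_def g_def ipr .
qed


lemma mat_trace_mult_comm:
  fixes A B :: "complex Matrix.mat"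
  assumes A: "A \<in> carrier_mat n m" and B: "B \<in> carrier_mat m n"
  shows "mat_trace (A * B) = mat_trace (B * A)"
proof -
  have "mat_trace (A * B) = (\<Sum>i<n. \<Sum>j<m. A $$ (i,j) * B $$ (j,i))"
    using A B by (simp add: mat_trace_def scalar_prod_def atLeast0LessThan)
  also have "\<dots> = (\<Sum>j<m. \<Sum>i<n. B $$ (j,i) * A $$ (i,j))"
    by (subst sum.swap) (simp add: mult.commute)
  also have "\<dots> = mat_trace (B * A)"
    using A B by (simp add: mat_trace_def scalar_prod_def atLeast0LessThan)
  finally show ?thesis .
qed

lemma upper_tri_mult:
  fixes U V :: "complex Matrix.mat"
  assumes U: "U \<in> carrier_mat n n" and V: "V \<in> carrier_mat n n"
    and uU: "upper_triangular U" and uV: "upper_triangular V"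
  shows "upper_triangular (U * V)" "\<And>i. i < n \<Longrightarrow> (U * V) $$ (i,i) = U $$ (i,i) * V $$ (i,i)"
proof -
  show "upper_triangular (U * V)"
  proof (rule upper_triangularI)
    fix i j assume ji: "j < i" and i: "i < dim_row (U * V)"
    have "(U * V) $$ (i,j) = (\<Sum>l\<in>{0..<n}. U $$ (i,l) * V $$ (l,j))"
      using U V i ji by (simp add: scalar_prod_def)
    also have "\<dots> = 0"
    proof (rule sum.neutral, clarify)
      fix l assume "l \<in> {0..<n}"
      then show "U $$ (i,l) * V $$ (l,j) = 0"
        using U V uU uV i ji by (cases "l < i") (auto simp: upper_triangular_def)
    qed
    finally show "(U * V) $$ (i,j) = 0" .
  qed
  fix i assume i: "i < n"
  have "(U * V) $$ (i,i) = (\<Sum>l\<in>{0..<n}. U $$ (i,l) * V $$ (l,i))"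
    using U V i by (simp add: scalar_prod_def)
  also have "\<dots> = (\<Sum>l\<in>{0..<n}. if l = i then U $$ (i,i) * V $$ (i,i) else 0)"
  proof (rule sum.cong[OF refl])
    fix l assume "l \<in> {0..<n}"
    then show "U $$ (i,l) * V $$ (l,i) = (if l = i then U $$ (i,i) * V $$ (i,i) else 0)"
      using U V uU uV i by (cases "l < i") (auto simp: upper_triangular_def)
  qed
  also have "\<dots> = U $$ (i,i) * V $$ (i,i)" using i by simp
  finally show "(U * V) $$ (i,i) = U $$ (i,i) * V $$ (i,i)" .
qed

lemma upper_tri_pow:
  fixes B :: "complex Matrix.mat"
  assumes B: "B \<in> carrier_mat n n" and uB: "upper_triangular B"
  shows "upper_triangular (B ^\<^sub>m k) \<and> (\<forall>i<n. (B ^\<^sub>m k) $$ (i,i) = B $$ (i,i) ^ k)"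
proof (induction k)
  case 0 then show ?case using B by auto
next
  case (Suc k)
  have Bk: "B ^\<^sub>m k \<in> carrier_mat n n" using B by simp
  show ?case using upper_tri_mult[OF Bk B] Suc uB by simp
qed

lemma trace_pow_eigen:
  fixes A :: "complex Matrix.mat"
  assumes A: "A \<in> carrier_mat n n"
  shows "mat_trace (A ^\<^sub>m k) = sum_mset (image_mset (\<lambda>l. l ^ k) (proots (char_poly A)))"
proof -
  obtain as where cp: "char_poly A = (\<Prod>a\<leftarrow>as. [:- a, 1:])" and len: "length as = n"
    using char_poly_factorized[OF A] by blast
  have pr: "proots (char_poly A) = mset as"
    unfolding cp
  proof (induction as)
    case (Cons a as)
    have nz: "(\<Prod>x\<leftarrow>as. [:- x, 1:]) \<noteq> (0::complex poly)"
      by (auto simp: prod_list_zero_iff)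
    have "proots (\<Prod>x\<leftarrow>a # as. [:- x, 1:]) = proots [:- a, 1:] + proots (\<Prod>x\<leftarrow>as. [:- x, 1:])"
      by (simp only: list.map prod_list.Cons) (rule proots_mult, simp, rule nz)
    then show ?case using Cons by simp
  qed simp
  obtain B P Q where sd: "schur_decomposition A as = (B,P,Q)" by (cases "schur_decomposition A as") auto
  from schur_decomposition[OF A cp sd] have sw: "similar_mat_wit A B P Q"
    and uB: "upper_triangular B" and dB: "diag_mat B = as" by auto
  from sw A have Bc: "B \<in> carrier_mat n n" and Pc: "P \<in> carrier_mat n n" and Qc: "Q \<in> carrier_mat n n"
    and QP: "Q * P = 1\<^sub>m n"
    unfolding similar_mat_wit_def Let_def by auto
  have "mat_trace (A ^\<^sub>m k) = mat_trace (P * B ^\<^sub>m k * Q)"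
    using similar_mat_wit_pow_id[OF sw] by simp
  also have "\<dots> = mat_trace (Q * (P * B ^\<^sub>m k))"
    by (rule mat_trace_mult_comm) (use Pc Bc Qc in auto)
  also have "Q * (P * B ^\<^sub>m k) = B ^\<^sub>m k"
    using Pc Bc Qc QP by (simp add: assoc_mult_mat[symmetric, of Q n n P n "B ^\<^sub>m k" n])
  also have "mat_trace (B ^\<^sub>m k) = (\<Sum>i<n. B $$ (i,i) ^ k)"
    using upper_tri_pow[OF Bc uB, of k] Bc by (simp add: mat_trace_def)
  also have "\<dots> = sum_list (map (\<lambda>l. l ^ k) as)"
    unfolding dB[symmetric] diag_mat_def using Bc
    by (simp add: interv_sum_list_conv_sum_set_nat atLeast0LessThan o_def)
  also have "\<dots> = sum_mset (image_mset (\<lambda>l. l ^ k) (proots (char_poly A)))"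
    unfolding pr by (simp add: sum_mset_sum_list[symmetric])
  finally show ?thesis .
qed


definition EV :: "nat \<Rightarrow> ('e::finite + nat) set" where
  "EV nu = {a. mvalid nu a}"

definition Ln :: "nat \<Rightarrow> nat \<Rightarrow> ('e::finite + nat) list set" where
  "Ln nu n = {p. set p \<subseteq> EV nu \<and> length p = n}"

definition Wt :: "('e::finite \<Rightarrow> nat) \<Rightarrow> ('e \<Rightarrow> int^'d::finite) \<Rightarrow> ('e \<Rightarrow> real) \<Rightarrow> (nat \<Rightarrow> real)
   \<Rightarrow> real^'d \<Rightarrow> 'e + nat \<Rightarrow> complex" where
  "Wt src tau alpha V k a = complex_of_real (momega src V a)
      * exp (\<i> * complex_of_real (malpha alpha a + ip (mtau tau a) k))"

lemma EV_eq: "EV nu = range Inl \<union> Inr ` {..<nu}"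
  unfolding EV_def by (auto elim: mvalid.elims)

lemma finite_EV: "finite (EV nu :: ('e::finite + nat) set)"
  unfolding EV_eq by simp

lemma finite_Ln: "finite (Ln nu n :: ('e::finite + nat) list set)"
  unfolding Ln_def by (rule finite_lists_length_eq[OF finite_EV])

lemma Ln_0: "Ln nu 0 = {[]}"
  unfolding Ln_def by auto

lemma Ln_Suc_sum:
  fixes F :: "('e::finite + nat) list \<Rightarrow> 'b::comm_monoid_add"
  shows "(\<Sum>q\<in>Ln nu (Suc n). F q) = (\<Sum>p\<in>Ln nu n. \<Sum>a\<in>EV nu. F (p @ [a]))"
proof -
  have img: "Ln nu (Suc n) = (\<lambda>(p,a). p @ [a]) ` (Ln nu n \<times> EV nu)"
  proof
    show "Ln nu (Suc n) \<subseteq> (\<lambda>(p,a). p @ [a]) ` (Ln nu n \<times> EV nu)"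
    proof
      fix q assume q: "q \<in> Ln nu (Suc n)"
      then have "q \<noteq> []" by (auto simp: Ln_def)
      then have "q = butlast q @ [last q]" by simp
      moreover have "butlast q \<in> Ln nu n" "last q \<in> EV nu"
        using q \<open>q \<noteq> []\<close> by (auto simp: Ln_def dest: in_set_butlastD)
      ultimately show "q \<in> (\<lambda>(p,a). p @ [a]) ` (Ln nu n \<times> EV nu)"
        by (metis (no_types, lifting) SigmaI case_prod_conv image_eqI)
    qed
  qed (auto simp: Ln_def)
  have inj: "inj_on (\<lambda>(p,a). p @ [a]) (Ln nu n \<times> EV nu)"
    by (auto simp: inj_on_def)
  show ?thesis
    unfolding img sum.reindex[OF inj] sum.cartesian_product by (simp add: split_def)
qed

lemma walk_append: "walk s t x (p @ q) y \<longleftrightarrow> (\<exists>z. walk s t x p z \<and> walk s t z q y)"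
  by (induction p arbitrary: x) auto

lemma walk_snoc: "walk s t x (p @ [a]) y \<longleftrightarrow> walk s t x p (s a) \<and> t a = y"
  by (simp add: walk_append)

lemma walk_unique: "walk s t x p z \<Longrightarrow> walk s t x p z' \<Longrightarrow> z = z'"
  by (induction p arbitrary: x) auto

lemma walk_hd: "walk s t x p y \<Longrightarrow> p \<noteq> [] \<Longrightarrow> x = s (hd p)"
  by (cases p) auto

lemma walk_nth:
  assumes "p \<noteq> []"
  shows "walk s t x p y \<longleftrightarrow> s (hd p) = x \<and> t (last p) = y \<and>
           (\<forall>i. Suc i < length p \<longrightarrow> t (p ! i) = s (p ! Suc i))"
  using assms
proof (induction p arbitrary: x)
  case Nil then show ?case by simp
next
  case (Cons a q)
  show ?case
  proof (cases "q = []")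
    case True then show ?thesis by auto
  next
    case False
    have "(\<forall>i. Suc i < length (a # q) \<longrightarrow> t ((a # q) ! i) = s ((a # q) ! Suc i)) \<longleftrightarrow>
          t a = s (hd q) \<and> (\<forall>i. Suc i < length q \<longrightarrow> t (q ! i) = s (q ! Suc i))"
      (is "?L \<longleftrightarrow> ?R")
    proof
      assume L: ?L
      have "t a = s (hd q)" using L[rule_format, of 0] False by (simp add: hd_conv_nth)
      moreover have "\<forall>i. Suc i < length q \<longrightarrow> t (q ! i) = s (q ! Suc i)"
        using L by (metis Suc_less_eq length_Cons nth_Cons_Suc)
      ultimately show ?R by simp
    next
      assume R: ?R
      show ?L
      proof (intro allI impI)
        fix i assume i: "Suc i < length (a # q)"
        show "t ((a # q) ! i) = s ((a # q) ! Suc i)"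
        proof (cases i)
          case 0 then show ?thesis using R False by (simp add: hd_conv_nth)
        next
          case (Suc j) then show ?thesis using R i by simp
        qed
      qed
    qed
    then show ?thesis using Cons.IH[OF False] False by auto
  qed
qed

lemma cycle_iff_walk:
  assumes "p \<noteq> []"
  shows "(\<forall>i<length p. t (p ! i) = s (p ! (Suc i mod length p))) \<longleftrightarrow> (\<exists>x. walk s t x p x)"
proof -
  let ?n = "length p"
  have n: "?n \<ge> 1" using assms by (cases p) auto
  have "(\<forall>i<?n. t (p ! i) = s (p ! (Suc i mod ?n))) \<longleftrightarrow>
        (\<forall>i. Suc i < ?n \<longrightarrow> t (p ! i) = s (p ! Suc i)) \<and> t (p ! (?n - 1)) = s (p ! 0)"
    (is "?A \<longleftrightarrow> ?B")
  proof
    assume A: ?A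
    have "\<forall>i. Suc i < ?n \<longrightarrow> t (p ! i) = s (p ! Suc i)"
      using A by (metis Suc_lessD mod_less)
    moreover have "t (p ! (?n - 1)) = s (p ! 0)"
    proof -
      have e: "Suc (?n - 1) = ?n" using n by simp
      show ?thesis using A[rule_format, of "?n - 1"] n unfolding e by simp
    qed
    ultimately show ?B by simp
  next
    assume B: ?B
    show ?A
    proof (intro allI impI)
      fix i assume i: "i < ?n"
      show "t (p ! i) = s (p ! (Suc i mod ?n))"
      proof (cases "Suc i < ?n")
        case True then show ?thesis using B by simp
      next
        case False
        then have "i = ?n - 1" "Suc i = ?n" using i by auto
        then show ?thesis using B by simp
      qed
    qed
  qed
  also have "\<dots> \<longleftrightarrow> walk s t (s (hd p)) p (s (hd p))"
    using assms by (simp add: walk_nth hd_conv_nth last_conv_nth) blast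
  also have "\<dots> \<longleftrightarrow> (\<exists>x. walk s t x p x)"
    using walk_hd[OF _ assms] by blast
  finally show ?thesis .
qed

lemma mcycles_walk:
  assumes "1 \<le> n"
  shows "mcycles nu src tgt n = {c. set c \<subseteq> EV nu \<and> length c = n \<and> (\<exists>x. walk (msrc src) (mtgt tgt) x c x)}"
proof -
  show ?thesis
    unfolding mcycles_def EV_def
  proof (rule Collect_cong)
    fix c :: "('a + nat) list"
    show "(length c = n \<and> (\<forall>a\<in>set c. mvalid nu a) \<and>
          (\<forall>i<n. mtgt tgt (c ! i) = msrc src (c ! (Suc i mod n)))) \<longleftrightarrow>
        (set c \<subseteq> {a. mvalid nu a} \<and> length c = n \<and> (\<exists>x. walk (msrc src) (mtgt tgt) x c x))"
    proof (cases "length c = n")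
      case True
      then have "c \<noteq> []" using assms by auto
      from cycle_iff_walk[OF this, of "mtgt tgt" "msrc src"] True show ?thesis by auto
    next
      case False then show ?thesis by auto
    qed
  qed
qed


lemma ip_add: "ip (a + b) k = ip a k + ip b k"
  by (simp add: ip_def distrib_right sum.distrib)
lemma ip_zero[simp]: "ip 0 k = 0"
  by (simp add: ip_def)
lemma ip_uminus: "ip (- a) k = - ip a k"
  by (simp add: ip_def sum_negf)

lemma prod_Wt:
  "prod_list (map (Wt src tau alpha V k) c)
     = complex_of_real (cyc_weight src V c) * exp (\<i> * complex_of_real (cyc_phase tau alpha c k))"
proof (induction c)
  case Nil then show ?case by (simp add: cyc_weight_def cyc_phase_def cyc_flux_def cyc_index_def)
next
  case (Cons a c)
  have "cyc_phase tau alpha (a # c) k = (malpha alpha a + ip (mtau tau a) k) + cyc_phase tau alpha c k"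
    by (simp add: cyc_phase_def cyc_flux_def cyc_index_def ip_add)
  then have "exp (\<i> * complex_of_real (cyc_phase tau alpha (a # c) k))
      = exp (\<i> * complex_of_real (malpha alpha a + ip (mtau tau a) k)) * exp (\<i> * complex_of_real (cyc_phase tau alpha c k))"
    by (simp add: distrib_left exp_add)
  then show ?case using Cons by (simp add: Wt_def cyc_weight_def)
qed

context
  fixes nu :: nat and src tgt :: "'e::finite \<Rightarrow> nat" and einv :: "'e \<Rightarrow> 'e"
    and tau :: "'e \<Rightarrow> int^'d::finite" and alpha :: "'e \<Rightarrow> real" and V :: "nat \<Rightarrow> real"
    and k :: "real^'d"
  assumes G: "fundamental_graph nu src tgt einv tau"
begin

lemma EV_bound: "a \<in> EV nu \<Longrightarrow> msrc src a < nu \<and> mtgt tgt a < nu"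
  using G by (cases a) (auto simp: EV_def fundamental_graph_def)

lemma H_carrier: "fiber_op nu src tgt tau alpha V k \<in> carrier_mat nu nu"
  by (simp add: fiber_op_def)

lemma H_entry:
  assumes x: "x < nu" and y: "y < nu"
  shows "fiber_op nu src tgt tau alpha V k $$ (x,y)
    = (\<Sum>a\<in>EV nu. if msrc src a = x \<and> mtgt tgt a = y then Wt src tau alpha V k a else 0)"
proof -
  let ?W = "Wt src tau alpha V k"
  have "(\<Sum>a\<in>EV nu. if msrc src a = x \<and> mtgt tgt a = y then ?W a else 0)
     = (\<Sum>a\<in>range Inl. if msrc src a = x \<and> mtgt tgt a = y then ?W a else 0)
       + (\<Sum>a\<in>Inr ` {..<nu}. if msrc src a = x \<and> mtgt tgt a = y then ?W a else 0)"
    unfolding EV_eq by (rule sum.union_disjoint) auto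
  also have "(\<Sum>a\<in>range Inl. if msrc src a = x \<and> mtgt tgt a = y then ?W a else 0)
     = (\<Sum>e\<in>UNIV. if src e = x \<and> tgt e = y then exp (\<i> * complex_of_real (alpha e + ip (tau e) k)) else 0)"
  proof -
    have WI: "\<And>e. ?W (Inl e) = exp (\<i> * complex_of_real (alpha e + ip (tau e) k))"
      by (simp add: Wt_def)
    show ?thesis by (subst sum.reindex) (auto simp: WI intro!: sum.cong)
  qed
  also have "\<dots> = (\<Sum>e\<in>{e. src e = x \<and> tgt e = y}. exp (\<i> * complex_of_real (alpha e + ip (tau e) k)))"
    by (simp add: sum.inter_filter[symmetric])
  also have "(\<Sum>a\<in>Inr ` {..<nu}. if msrc src a = x \<and> mtgt tgt a = y then ?W a else 0)
     = (\<Sum>z\<in>{..<nu}. if z = x then (if x = y then complex_of_real (V x - real (deg src x)) else 0) else 0)"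
  proof -
    have WR: "\<And>z. ?W (Inr z) = complex_of_real (V z - real (deg src z))"
      by (simp add: Wt_def)
    show ?thesis
      apply (subst sum.reindex, simp)
      apply (rule sum.cong[OF refl])
      apply (auto simp: WR)
      done
  qed
  also have "\<dots> = (if x = y then complex_of_real (V x - real (deg src x)) else 0)"
    using x by simp
  finally show ?thesis using x y by (simp add: fiber_op_def)
qed

lemma H_pow:
  assumes x: "x < nu" and y: "y < nu"
  shows "(fiber_op nu src tgt tau alpha V k ^\<^sub>m n) $$ (x,y)
    = (\<Sum>p\<in>Ln nu n. if walk (msrc src) (mtgt tgt) x p y then prod_list (map (Wt src tau alpha V k) p) else 0)"
  using y
proof (induction n arbitrary: y)
  case 0
  then show ?case using x H_carrier by (simp add: Ln_0)
next
  case (Suc n)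
  let ?H = "fiber_op nu src tgt tau alpha V k"
  let ?W = "Wt src tau alpha V k"
  let ?w = "walk (msrc src) (mtgt tgt)"
  have Hc: "?H \<in> carrier_mat nu nu" by (rule H_carrier)
  have "(?H ^\<^sub>m Suc n) $$ (x,y) = (\<Sum>z\<in>{..<nu}. (?H ^\<^sub>m n) $$ (x,z) * ?H $$ (z,y))"
    using Hc x Suc.prems by (simp add: scalar_prod_def atLeast0LessThan)
  also have "\<dots> = (\<Sum>z\<in>{..<nu}. (\<Sum>p\<in>Ln nu n. if ?w x p z then prod_list (map ?W p) else 0)
        * (\<Sum>a\<in>EV nu. if msrc src a = z \<and> mtgt tgt a = y then ?W a else 0))"
    using Suc.IH H_entry Suc.prems by (intro sum.cong refl) auto
  also have "\<dots> = (\<Sum>z\<in>{..<nu}. \<Sum>p\<in>Ln nu n. \<Sum>a\<in>EV nu.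
        if ?w x p z \<and> msrc src a = z \<and> mtgt tgt a = y then prod_list (map ?W p) * ?W a else 0)"
    unfolding sum_product by (intro sum.cong refl) simp
  also have "\<dots> = (\<Sum>p\<in>Ln nu n. \<Sum>a\<in>EV nu. \<Sum>z\<in>{..<nu}.
        if ?w x p z \<and> msrc src a = z \<and> mtgt tgt a = y then prod_list (map ?W p) * ?W a else 0)"
    by (subst sum.swap) (subst (2) sum.swap, rule refl)
  also have "\<dots> = (\<Sum>p\<in>Ln nu n. \<Sum>a\<in>EV nu.
        if ?w x (p @ [a]) y then prod_list (map ?W (p @ [a])) else 0)"
  proof (intro sum.cong refl)
    fix p :: "('e + nat) list" and a :: "'e + nat" assume a: "a \<in> EV nu"
    have "(\<Sum>z\<in>{..<nu}. if ?w x p z \<and> msrc src a = z \<and> mtgt tgt a = y then prod_list (map ?W p) * ?W a else 0)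
      = (\<Sum>z\<in>{..<nu}. if z = msrc src a then (if ?w x p (msrc src a) \<and> mtgt tgt a = y then prod_list (map ?W p) * ?W a else 0) else 0)"
      by (intro sum.cong refl) auto
    also have "\<dots> = (if ?w x p (msrc src a) \<and> mtgt tgt a = y then prod_list (map ?W p) * ?W a else 0)"
      using EV_bound[OF a] by simp
    also have "\<dots> = (if ?w x (p @ [a]) y then prod_list (map ?W (p @ [a])) else 0)"
      by (simp add: walk_snoc)
    finally show "(\<Sum>z\<in>{..<nu}. if ?w x p z \<and> msrc src a = z \<and> mtgt tgt a = y then prod_list (map ?W p) * ?W a else 0)
      = (if ?w x (p @ [a]) y then prod_list (map ?W (p @ [a])) else 0)" .
  qed
  also have "\<dots> = (\<Sum>q\<in>Ln nu (Suc n). if ?w x q y then prod_list (map ?W q) else 0)"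
    by (rule Ln_Suc_sum[symmetric])
  finally show ?case .
qed

lemma trace_H_pow:
  assumes n: "1 \<le> n"
  shows "mat_trace (fiber_op nu src tgt tau alpha V k ^\<^sub>m n)
     = (\<Sum>c\<in>mcycles nu src tgt n. prod_list (map (Wt src tau alpha V k) c))"
proof -
  let ?H = "fiber_op nu src tgt tau alpha V k"
  let ?W = "Wt src tau alpha V k"
  let ?w = "walk (msrc src) (mtgt tgt)"
  have "mat_trace (?H ^\<^sub>m n) = (\<Sum>x<nu. (?H ^\<^sub>m n) $$ (x,x))"
    using H_carrier by (simp add: mat_trace_def)
  also have "\<dots> = (\<Sum>x<nu. \<Sum>p\<in>Ln nu n. if ?w x p x then prod_list (map ?W p) else 0)"
    by (intro sum.cong refl H_pow) auto
  also have "\<dots> = (\<Sum>p\<in>Ln nu n. \<Sum>x<nu. if ?w x p x then prod_list (map ?W p) else 0)"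
    by (rule sum.swap)
  also have "\<dots> = (\<Sum>p\<in>Ln nu n. if p \<in> mcycles nu src tgt n then prod_list (map ?W p) else 0)"
  proof (intro sum.cong refl)
    fix p :: "('e + nat) list" assume p: "p \<in> Ln nu n"
    then have pne: "p \<noteq> []" using n by (auto simp: Ln_def)
    then have hd: "hd p \<in> EV nu" using p hd_in_set[OF pne] by (auto simp: Ln_def)
    define x0 where "x0 = msrc src (hd p)"
    have x0: "x0 < nu" using EV_bound[OF hd] by (simp add: x0_def)
    have "(\<Sum>x<nu. if ?w x p x then prod_list (map ?W p) else 0)
       = (\<Sum>x<nu. if x = x0 then (if ?w x0 p x0 then prod_list (map ?W p) else 0) else 0)"
      using walk_hd[OF _ pne] by (intro sum.cong refl) (auto simp: x0_def)
    also have "\<dots> = (if ?w x0 p x0 then prod_list (map ?W p) else 0)" using x0 by simp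
    also have "?w x0 p x0 \<longleftrightarrow> p \<in> mcycles nu src tgt n"
      using p n walk_hd[OF _ pne] unfolding mcycles_walk[OF n] Ln_def x0_def by auto
    finally show "(\<Sum>x<nu. if ?w x p x then prod_list (map ?W p) else 0)
       = (if p \<in> mcycles nu src tgt n then prod_list (map ?W p) else 0)" .
  qed
  also have "\<dots> = (\<Sum>p\<in>{p\<in>Ln nu n. p \<in> mcycles nu src tgt n}. prod_list (map ?W p))"
    by (rule sum.inter_filter[symmetric, OF finite_Ln])
  also have "{p\<in>Ln nu n. p \<in> mcycles nu src tgt n} = mcycles nu src tgt n"
    unfolding mcycles_walk[OF n] Ln_def by auto
  finally show ?thesis .
qed

end


section \<open>Reversal of cycles\<close>

lemma sum_list_neg: "sum_list (map (\<lambda>x. - f x) xs) = - sum_list (map f xs :: 'b::ab_group_add list)"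
  by (induction xs) auto

lemma exp_phase_split:
  "exp (- \<i> * complex_of_real (cyc_phase tau alpha c k))
   = exp (- \<i> * complex_of_real (cyc_flux alpha c)) * exp (- \<i> * complex_of_real (ip (cyc_index tau c) k))"
  unfolding cyc_phase_def by (simp add: mult_exp_exp ring_distribs)

definition ei :: "('e \<Rightarrow> 'e) \<Rightarrow> 'e + nat \<Rightarrow> 'e + nat" where
  "ei einv a = (case a of Inl e \<Rightarrow> Inl (einv e) | Inr x \<Rightarrow> Inr x)"

definition rvc :: "('e \<Rightarrow> 'e) \<Rightarrow> ('e + nat) list \<Rightarrow> ('e + nat) list" where
  "rvc einv c = rev (map (ei einv) c)"

lemma sym_sum:
  fixes w f :: "'c \<Rightarrow> real"
  assumes fin: "finite S"
    and r1: "\<And>c. c \<in> S \<Longrightarrow> r c \<in> S" and r2: "\<And>c. c \<in> S \<Longrightarrow> r (r c) = c"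
    and rw: "\<And>c. c \<in> S \<Longrightarrow> w (r c) = w c" and rf: "\<And>c. c \<in> S \<Longrightarrow> f (r c) = - f c"
  shows "(\<Sum>c\<in>S. complex_of_real (w c) * exp (- \<i> * complex_of_real (f c)))
       = (\<Sum>c\<in>S. complex_of_real (w c) * exp (\<i> * complex_of_real (f c)))"
    and "(\<Sum>c\<in>S. complex_of_real (w c) * exp (- \<i> * complex_of_real (f c)))
       = (\<Sum>c\<in>S. complex_of_real (w c * cos (f c)))"
proof -
  let ?M = "\<Sum>c\<in>S. complex_of_real (w c) * exp (- \<i> * complex_of_real (f c))"
  let ?P = "\<Sum>c\<in>S. complex_of_real (w c) * exp (\<i> * complex_of_real (f c))"
  have "?M = (\<Sum>c\<in>S. complex_of_real (w (r c)) * exp (- \<i> * complex_of_real (f (r c))))"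
    by (rule sum.reindex_bij_witness[of S r r]) (auto simp: r1 r2)
  also have "\<dots> = ?P"
    by (intro sum.cong refl) (simp add: rw rf)
  finally show MP: "?M = ?P" .
  have cs: "complex_of_real (cos x) = (exp (\<i> * complex_of_real x) + exp (- \<i> * complex_of_real x)) / 2" for x
    by (simp add: cos_exp_eq flip: cos_of_real)
  have "(\<Sum>c\<in>S. complex_of_real (w c * cos (f c)))
     = (\<Sum>c\<in>S. (complex_of_real (w c) * exp (\<i> * complex_of_real (f c))
          + complex_of_real (w c) * exp (- \<i> * complex_of_real (f c))) / 2)"
    by (intro sum.cong refl) (simp add: cs field_simps)
  also have "\<dots> = (?P + ?M) / 2"
    by (simp add: sum_divide_distrib[symmetric] sum.distrib)
  also have "\<dots> = ?M" using MP by simp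
  finally show "?M = (\<Sum>c\<in>S. complex_of_real (w c * cos (f c)))" by simp
qed

context
  fixes nu :: nat and src tgt :: "'e::finite \<Rightarrow> nat" and einv :: "'e \<Rightarrow> 'e"
    and tau :: "'e \<Rightarrow> int^'d::finite" and alpha :: "'e \<Rightarrow> real" and V :: "nat \<Rightarrow> real"
  assumes G: "fundamental_graph nu src tgt einv tau"
    and MP: "magnetic_potential einv alpha"
begin

lemma ei_props:
  "msrc src (ei einv a) = mtgt tgt a" "mtgt tgt (ei einv a) = msrc src a"
  "mvalid nu (ei einv a) = mvalid nu a" "ei einv (ei einv a) = a"
  "momega src V (ei einv a) = momega src V a" "mtau tau (ei einv a) = - mtau tau a"
  "malpha alpha (ei einv a) = - malpha alpha a"
  using G MP by (cases a; simp add: ei_def fundamental_graph_def magnetic_potential_def)+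

lemma walk_rvc:
  "walk (msrc src) (mtgt tgt) x p y \<Longrightarrow> walk (msrc src) (mtgt tgt) y (rvc einv p) x"
proof (induction p arbitrary: x)
  case Nil then show ?case by (simp add: rvc_def)
next
  case (Cons a p)
  then have "msrc src a = x" "walk (msrc src) (mtgt tgt) (mtgt tgt a) p y" by auto
  then show ?case using Cons.IH
    by (simp add: rvc_def walk_snoc ei_props)
qed

lemma rvc_rvc: "rvc einv (rvc einv c) = c"
  by (simp add: rvc_def rev_map o_def ei_props)

lemma rvc_mcycles:
  assumes n: "1 \<le> n" and c: "c \<in> mcycles nu src tgt n"
  shows "rvc einv c \<in> mcycles nu src tgt n"
  using c walk_rvc ei_props(3) unfolding mcycles_walk[OF n] EV_def
  by (auto simp: rvc_def)

lemma rvc_weight: "cyc_weight src V (rvc einv c) = cyc_weight src V c"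
  by (simp add: cyc_weight_def rvc_def rev_map[symmetric] o_def ei_props)

lemma rvc_index: "cyc_index tau (rvc einv c) = - cyc_index tau c"
  by (simp add: cyc_index_def rvc_def rev_map[symmetric] o_def ei_props sum_list_rev sum_list_neg)

lemma rvc_flux: "cyc_flux alpha (rvc einv c) = - cyc_flux alpha c"
  by (simp add: cyc_flux_def rvc_def rev_map[symmetric] o_def ei_props sum_list_rev sum_list_neg)

lemma rvc_phase: "cyc_phase tau alpha (rvc einv c) k = - cyc_phase tau alpha c k"
  by (simp add: cyc_phase_def rvc_flux rvc_index ip_uminus)

end

section \<open>Index bounds and finiteness\<close>

definition rvv :: "int^'d::finite \<Rightarrow> real^'d" where
  "rvv m = (\<chi> i. real_of_int (m $ i))"

lemma ivnorm_norm: "ivnorm m = norm (rvv m)"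
  by (simp add: ivnorm_def norm_vec_def L2_set_def rvv_def)

lemma rvv_add: "rvv (a + b) = rvv a + rvv b"
  by (simp add: rvv_def Finite_Cartesian_Product.vec_eq_iff)

lemma rvv_zero[simp]: "rvv 0 = 0"
  by (simp add: rvv_def Finite_Cartesian_Product.vec_eq_iff)

lemma tau_plus_ge: "ivnorm (tau e) \<le> tau_plus tau"
  unfolding tau_plus_def by (rule Max_ge) auto

lemma ivnorm_nonneg: "0 \<le> ivnorm m"
  by (simp add: ivnorm_def sum_nonneg)

lemma tau_plus_nonneg: "0 \<le> tau_plus tau"
  using tau_plus_ge[of tau undefined] ivnorm_nonneg[of "tau undefined"] by linarith

lemma index_bound: "ivnorm (cyc_index tau c) \<le> real (length c) * tau_plus tau"
proof (induction c)
  case Nil then show ?case by (simp add: cyc_index_def ivnorm_norm)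
next
  case (Cons a c)
  have ta: "norm (rvv (mtau tau a)) \<le> tau_plus tau"
    using tau_plus_ge[of tau] tau_plus_nonneg[of tau] by (cases a) (auto simp: ivnorm_norm)
  have "ivnorm (cyc_index tau (a # c)) = norm (rvv (mtau tau a) + rvv (cyc_index tau c))"
    by (simp add: cyc_index_def ivnorm_norm rvv_add)
  also have "\<dots> \<le> norm (rvv (mtau tau a)) + norm (rvv (cyc_index tau c))"
    by (rule norm_triangle_ineq)
  also have "\<dots> \<le> tau_plus tau + real (length c) * tau_plus tau"
    using ta Cons.IH by (simp add: ivnorm_norm)
  finally show ?case by (simp add: algebra_simps)
qed

lemma finite_ivnorm_le: "finite {m :: int^'d::finite. ivnorm m \<le> R}"
proof -
  define N where "N = \<lceil>R\<rceil>"
  have sub: "vec_nth ` {m :: int^'d. ivnorm m \<le> R} \<subseteq> Pi\<^sub>E UNIV (\<lambda>_. {-N..N})"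
  proof
    fix f assume "f \<in> vec_nth ` {m :: int^'d. ivnorm m \<le> R}"
    then obtain m :: "int^'d" where m: "ivnorm m \<le> R" and f: "f = vec_nth m" by auto
    have "\<bar>m $ i\<bar> \<le> N" for i
    proof -
      have "real_of_int \<bar>m $ i\<bar> = \<bar>rvv m $ i\<bar>" by (simp add: rvv_def)
      also have "\<dots> \<le> norm (rvv m)" by (rule component_le_norm_cart)
      also have "\<dots> \<le> R" using m by (simp add: ivnorm_norm)
      finally have "real_of_int \<bar>m $ i\<bar> \<le> R" .
      then show ?thesis unfolding N_def by linarith
    qed
    then show "f \<in> Pi\<^sub>E UNIV (\<lambda>_. {-N..N})" using f by (auto simp: abs_le_iff minus_le_iff)
  qed
  have "finite (vec_nth ` {m :: int^'d. ivnorm m \<le> R})"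
    by (rule finite_subset[OF sub]) (rule finite_PiE, auto)
  moreover have "inj_on vec_nth {m :: int^'d. ivnorm m \<le> R}"
    by (auto simp: inj_on_def vec_nth_inject)
  ultimately show ?thesis by (rule finite_imageD)
qed

lemma finite_mcycles: "finite (mcycles nu src tgt n :: ('e::finite + nat) list set)"
proof -
  have "mcycles nu src tgt n \<subseteq> Ln nu n"
    by (auto simp: mcycles_def Ln_def EV_def)
  then show ?thesis using finite_Ln finite_subset by blast
qed

lemma fourier_regroup:
  fixes C :: "('e::finite + nat) list set" and tau :: "'e \<Rightarrow> int^'d::finite"
  assumes fC: "finite C" and fM: "finite M" and sub: "\<And>c. c \<in> C \<Longrightarrow> cyc_index tau c \<in> M"
  shows "(\<Sum>c\<in>C. complex_of_real (cyc_weight src V c) * exp (- \<i> * complex_of_real (cyc_phase tau alpha c k)))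
    = (\<Sum>m\<in>M. (\<Sum>c\<in>{c\<in>C. cyc_index tau c = m}. complex_of_real (cyc_weight src V c)
          * exp (- \<i> * complex_of_real (cyc_flux alpha c))) * exp (- \<i> * complex_of_real (ip m k)))"
proof -
  have "(\<Sum>m\<in>M. (\<Sum>c\<in>{c\<in>C. cyc_index tau c = m}. complex_of_real (cyc_weight src V c)
          * exp (- \<i> * complex_of_real (cyc_flux alpha c))) * exp (- \<i> * complex_of_real (ip m k)))
     = (\<Sum>m\<in>M. \<Sum>c\<in>{c\<in>C. cyc_index tau c = m}. complex_of_real (cyc_weight src V c)
          * exp (- \<i> * complex_of_real (cyc_phase tau alpha c k)))"
  proof (intro sum.cong refl)
    fix m
    show "(\<Sum>c\<in>{c\<in>C. cyc_index tau c = m}. complex_of_real (cyc_weight src V c)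
          * exp (- \<i> * complex_of_real (cyc_flux alpha c))) * exp (- \<i> * complex_of_real (ip m k))
       = (\<Sum>c\<in>{c\<in>C. cyc_index tau c = m}. complex_of_real (cyc_weight src V c)
          * exp (- \<i> * complex_of_real (cyc_phase tau alpha c k)))"
      unfolding sum_distrib_right exp_phase_split
      by (intro sum.cong refl) (auto simp: mult.assoc)
  qed
  also have "\<dots> = (\<Sum>c\<in>C. complex_of_real (cyc_weight src V c) * exp (- \<i> * complex_of_real (cyc_phase tau alpha c k)))"
    by (rule sum.group[OF fC fM]) (auto intro: sub)
  finally show ?thesis by simp
qed

lemma continuous_ip: "continuous_on S (\<lambda>k. ip m k)"
  unfolding ip_def by (intro continuous_intros)

theorem theorem2p6:
  fixes nu :: nat and src tgt :: "'e::finite \<Rightarrow> nat" and einv :: "'e \<Rightarrow> 'e"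
    and tau :: "'e \<Rightarrow> int^'d::finite" and alpha :: "'e \<Rightarrow> real" and V :: "nat \<Rightarrow> real"
    and n :: nat
  assumes "fundamental_graph nu src tgt einv tau"
    and "periodic_connected nu src tgt tau"
    and "magnetic_potential einv alpha"
    and "1 \<le> n"
  shows "(\<forall>k. mat_trace (fiber_op nu src tgt tau alpha V k ^\<^sub>m n)
              = sum_mset (image_mset (\<lambda>l. l ^ n) (proots (char_poly (fiber_op nu src tgt tau alpha V k))))
           \<and> sum_mset (image_mset (\<lambda>l. l ^ n) (proots (char_poly (fiber_op nu src tgt tau alpha V k))))
              = trace_T nu src tgt tau alpha V n k
           \<and> trace_T nu src tgt tau alpha V n k
              = (\<Sum>c\<in>mcycles nu src tgt n. complex_of_real (cyc_weight src V c * cos (cyc_phase tau alpha c k)))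
           \<and> trace_T nu src tgt tau alpha V n k
              = (\<Sum>m\<in>{m. ivnorm m \<le> real n * tau_plus tau}.
                   trace_Tm nu src tgt tau alpha V n m * exp (- \<i> * complex_of_real (ip m k))))
       \<and> complex_of_real (1 / (2 * pi) ^ CARD('d)) *
           integral (cbox (0::real^'d) (\<chi> i. 2 * pi))
             (\<lambda>k. mat_trace (fiber_op nu src tgt tau alpha V k ^\<^sub>m n))
           = trace_Tm nu src tgt tau alpha V n 0
       \<and> trace_Tm nu src tgt tau alpha V n 0
           = (\<Sum>c\<in>{c\<in>mcycles nu src tgt n. cyc_index tau c = 0}.
                complex_of_real (cyc_weight src V c * cos (cyc_flux alpha c)))"
proof -
  note G = assms(1) and MPot = assms(3) and n = assms(4)
  let ?C = "mcycles nu src tgt n"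
  let ?H = "\<lambda>k. fiber_op nu src tgt tau alpha V k"
  let ?M = "{m :: int^'d. ivnorm m \<le> real n * tau_plus tau}"
  have fC: "finite ?C" by (rule finite_mcycles)
  have fM: "finite ?M" by (rule finite_ivnorm_le)
  have subM: "cyc_index tau c \<in> ?M" if "c \<in> ?C" for c
    using index_bound[of tau c] that by (auto simp: mcycles_def)
  have rv1: "\<And>c. c \<in> ?C \<Longrightarrow> rvc einv c \<in> ?C"
    using rvc_mcycles[OF G MPot n] .
  have rv2: "\<And>c. rvc einv (rvc einv c) = c" using rvc_rvc[OF G MPot] .
  have part1: "mat_trace (?H k ^\<^sub>m n)
              = sum_mset (image_mset (\<lambda>l. l ^ n) (proots (char_poly (?H k))))
           \<and> sum_mset (image_mset (\<lambda>l. l ^ n) (proots (char_poly (?H k))))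
              = trace_T nu src tgt tau alpha V n k
           \<and> trace_T nu src tgt tau alpha V n k
              = (\<Sum>c\<in>?C. complex_of_real (cyc_weight src V c * cos (cyc_phase tau alpha c k)))
           \<and> trace_T nu src tgt tau alpha V n k
              = (\<Sum>m\<in>?M. trace_Tm nu src tgt tau alpha V n m * exp (- \<i> * complex_of_real (ip m k)))"
    for k
  proof -
    have e1: "mat_trace (?H k ^\<^sub>m n) = sum_mset (image_mset (\<lambda>l. l ^ n) (proots (char_poly (?H k))))"
      by (rule trace_pow_eigen[OF H_carrier[OF G]])
    have sym1: "(\<Sum>c\<in>?C. complex_of_real (cyc_weight src V c) * exp (- \<i> * complex_of_real (cyc_phase tau alpha c k)))
       = (\<Sum>c\<in>?C. complex_of_real (cyc_weight src V c) * exp (\<i> * complex_of_real (cyc_phase tau alpha c k)))"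
      by (rule sym_sum(1)[where w="\<lambda>c. cyc_weight src V c" and f="\<lambda>c. cyc_phase tau alpha c k",
            OF fC rv1 rv2 rvc_weight[OF G MPot] rvc_phase[OF G MPot]])
    have sym2: "(\<Sum>c\<in>?C. complex_of_real (cyc_weight src V c) * exp (- \<i> * complex_of_real (cyc_phase tau alpha c k)))
       = (\<Sum>c\<in>?C. complex_of_real (cyc_weight src V c * cos (cyc_phase tau alpha c k)))"
      by (rule sym_sum(2)[where w="\<lambda>c. cyc_weight src V c" and f="\<lambda>c. cyc_phase tau alpha c k",
            OF fC rv1 rv2 rvc_weight[OF G MPot] rvc_phase[OF G MPot]])
    note sym = sym1 sym2
    have tr: "mat_trace (?H k ^\<^sub>m n) = trace_T nu src tgt tau alpha V n k"
      unfolding trace_H_pow[OF G n] trace_T_def prod_Wt sym(1) ..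
    have fo: "trace_T nu src tgt tau alpha V n k
       = (\<Sum>m\<in>?M. trace_Tm nu src tgt tau alpha V n m * exp (- \<i> * complex_of_real (ip m k)))"
      unfolding trace_T_def trace_Tm_def by (rule fourier_regroup[OF fC fM subM])
    show ?thesis using e1 tr fo sym(2) by (simp add: trace_T_def)
  qed
  have part2: "complex_of_real (1 / (2 * pi) ^ CARD('d)) *
           integral (cbox (0::real^'d) (\<chi> i. 2 * pi)) (\<lambda>k. mat_trace (?H k ^\<^sub>m n))
           = trace_Tm nu src tgt tau alpha V n 0"
  proof -
    let ?T = "\<lambda>m. trace_Tm nu src tgt tau alpha V n m"
    let ?B = "cbox (0::real^'d) (\<chi> i. 2 * pi)"
    have "integral ?B (\<lambda>k. mat_trace (?H k ^\<^sub>m n))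
        = integral ?B (\<lambda>k. \<Sum>m\<in>?M. ?T m * exp (- \<i> * complex_of_real (ip m k)))"
      using part1 by (intro integral_cong) (metis (no_types, lifting))
    also have "\<dots> = (\<Sum>m\<in>?M. integral ?B (\<lambda>k. ?T m * exp (- \<i> * complex_of_real (ip m k))))"
    proof (rule integral_sum[OF fM])
      fix m :: "int^'d"
      show "(\<lambda>k. ?T m * exp (- \<i> * complex_of_real (ip m k))) integrable_on ?B"
        by (rule integrable_continuous) (intro continuous_intros continuous_ip)
    qed
    also have "\<dots> = (\<Sum>m\<in>?M. ?T m * (if m = 0 then complex_of_real ((2*pi)^CARD('d)) else 0))"
      by (intro sum.cong refl) (simp only: integral_mult_right box_exp_integral)
    also have "\<dots> = (\<Sum>m\<in>?M. if m = 0 then ?T 0 * complex_of_real ((2*pi)^CARD('d)) else 0)"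
      by (intro sum.cong refl) auto
    also have "\<dots> = ?T 0 * complex_of_real ((2*pi)^CARD('d))"
    proof -
      have zM: "(0::int^'d) \<in> ?M"
        using tau_plus_nonneg[of tau] by (simp add: ivnorm_def)
      show ?thesis by (simp only: sum.delta[OF fM] zM if_True)
    qed
    finally show ?thesis by simp
  qed
  have part3: "trace_Tm nu src tgt tau alpha V n 0
           = (\<Sum>c\<in>{c\<in>?C. cyc_index tau c = 0}. complex_of_real (cyc_weight src V c * cos (cyc_flux alpha c)))"
  proof -
    have f0: "finite {c\<in>?C. cyc_index tau c = 0}" using fC by simp
    have r0: "rvc einv c \<in> {c\<in>?C. cyc_index tau c = 0}" if "c \<in> {c\<in>?C. cyc_index tau c = 0}" for c
      using that rv1 rvc_index[OF G MPot] by auto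
    show ?thesis unfolding trace_Tm_def
      by (rule sym_sum(2)[where w="\<lambda>c. cyc_weight src V c" and f="\<lambda>c. cyc_flux alpha c",
            OF f0 r0 rv2 rvc_weight[OF G MPot] rvc_flux[OF G MPot]])
  qed
  show ?thesis using part1 part2 part3 by blast
qed

end
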